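(* Let $n\ge3$, $k\ge0$ with $n\le k$. Let $S\subseteq\mathrm{Inc}(A,B)$ be an independent, non-reversible set in $G_n^k$ which contains a strict alternating cycle $\{(x_\alpha,y_\alpha):\alpha\in[3]\}$ satisfying the Disjoint Property with $x_1=a_1$ and $y_3=b_{k+2}$. If $A(S)\subseteq\{a_1,\dots,a_{k+2}\}$ and $B(S)\subseteq\{b_1,\dots,b_{k+2}\}$, then $|S|\le (k+1)(k+2)/2+2-n$.
   Context: For integers $n\ge3$, $k\ge0$, the crown $S_n^k$ is the poset with ground set $A\cup B$, $A=\{a_1,\dots,a_{n+k}\}$, $B=\{b_1,\dots,b_{n+k}\}$, indices cyclic modulo $n+k$; elements of $A$ are pairwise incomparable, as are elements of $B$, and $a_i$ is incomparable to $b_j$ when $j\in\{i,\dots,i+k\}$ (mod $n+k$), while $a_i<b_j$ otherwise. $\mathrm{Inc}(A,B)$ is the set of pairs $(a,b)\in A\times B$ with $a$ incomparable to $b$; $G_n^k$ has vertex set $\mathrm{Inc}(A,B)$ with $(a,b)$ adjacent to $(x,y)$ iff $a<y$ and $x<b$. A set $R\subseteq\mathrm{Inc}(A,B)$ is reversible if some linear extension $L$ of $S_n^k$ has $b<a$ in $L$ for all $(a,b)\in R$. $A(S)=\{a:\exists b,(a,b)\in S\}$, $B(S)=\{b:\exists a,(a,b)\in S\}$. An indexed set $\{(x_\alpha,y_\alpha):\alpha\in[m]\}\subseteq\mathrm{Inc}(A,B)$ is an alternating cycle if $x_\alpha\le y_{\alpha-1}$ for all $\alpha$ (cyclic indices);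 strict if $x_\alpha\le y_\beta$ iff $\beta=\alpha-1$. Circle conventions: points $u_1,\dots,u_{n+k}$ lie clockwise on a circle, with $a_i$ and $b_i$ both at $u_i$; a chain $p_1\,R_1\,p_2\cdots p_\ell$ with $R_j\in\{\prec,\preceq\}$ means travelling clockwise from the position of $p_1$ until first reaching the position of $p_\ell$ one meets the positions of $p_2,\dots,p_{\ell-1}$ in order, $\prec$ requiring distinct consecutive positions and $\preceq$ allowing equality. A strict alternating cycle of size $3$ satisfies the Disjoint Property if $x_1\preceq y_1\prec x_2\preceq y_2\prec x_3\preceq y_3$. *)

theory Defs
  imports Complex_Main
begin

text \<open>Elements of the crown S_n^k: CA i is a_i, CB j is b_j, indices 1..n+k.\<close>
datatype crown_el = CA nat | CB nat

definition crown_ground :: "nat \<Rightarrow> nat \<Rightarrow> crown_el set" where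
  "crown_ground n k = CA ` {1..n+k} \<union> CB ` {1..n+k}"

text \<open>a_i is incomparable to b_j iff j \<in> {i,...,i+k} (mod n+k).\<close>
definition cyc_inc :: "nat \<Rightarrow> nat \<Rightarrow> nat \<Rightarrow> nat \<Rightarrow> bool" where
  "cyc_inc n k i j \<longleftrightarrow> (int j - int i) mod int (n + k) \<le> int k"

definition crown_less :: "nat \<Rightarrow> nat \<Rightarrow> crown_el \<Rightarrow> crown_el \<Rightarrow> bool" where
  "crown_less n k p q \<longleftrightarrow> (\<exists>i j. p = CA i \<and> q = CB j \<and> i \<in> {1..n+k} \<and> j \<in> {1..n+k}
      \<and> \<not> cyc_inc n k i j)"

definition crown_le :: "nat \<Rightarrow> nat \<Rightarrow> crown_el \<Rightarrow> crown_el \<Rightarrow> bool" where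
  "crown_le n k p q \<longleftrightarrow> p = q \<or> crown_less n k p q"

definition Inc :: "nat \<Rightarrow> nat \<Rightarrow> (crown_el \<times> crown_el) set" where
  "Inc n k = {(CA i, CB j) | i j. i \<in> {1..n+k} \<and> j \<in> {1..n+k} \<and> cyc_inc n k i j}"

definition G_adj :: "nat \<Rightarrow> nat \<Rightarrow> crown_el \<times> crown_el \<Rightarrow> crown_el \<times> crown_el \<Rightarrow> bool" where
  "G_adj n k p q \<longleftrightarrow> crown_less n k (fst p) (snd q) \<and> crown_less n k (fst q) (snd p)"

definition G_independent :: "nat \<Rightarrow> nat \<Rightarrow> (crown_el \<times> crown_el) set \<Rightarrow> bool" where
  "G_independent n k S \<longleftrightarrow> S \<subseteq> Inc n k \<and> (\<forall>p\<in>S. \<forall>q\<in>S. \<not> G_adj n k p q)"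

definition linear_extension :: "nat \<Rightarrow> nat \<Rightarrow> (crown_el \<times> crown_el) set \<Rightarrow> bool" where
  "linear_extension n k L \<longleftrightarrow> L \<subseteq> crown_ground n k \<times> crown_ground n k
     \<and> strict_linear_order_on (crown_ground n k) L
     \<and> (\<forall>p q. crown_less n k p q \<longrightarrow> (p, q) \<in> L)"

definition reversible :: "nat \<Rightarrow> nat \<Rightarrow> (crown_el \<times> crown_el) set \<Rightarrow> bool" where
  "reversible n k R \<longleftrightarrow> R \<subseteq> Inc n k \<and>
     (\<exists>L. linear_extension n k L \<and> (\<forall>(a, b)\<in>R. (b, a) \<in> L))"

definition cprev :: "nat \<Rightarrow> nat \<Rightarrow> nat" where
  "cprev m \<alpha> = (if \<alpha> = 1 then m else \<alpha> - 1)"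

definition alt_cycle :: "nat \<Rightarrow> nat \<Rightarrow> nat \<Rightarrow> (nat \<Rightarrow> crown_el) \<Rightarrow> (nat \<Rightarrow> crown_el) \<Rightarrow> bool" where
  "alt_cycle n k m x y \<longleftrightarrow> (\<forall>\<alpha>\<in>{1..m}. (x \<alpha>, y \<alpha>) \<in> Inc n k)
     \<and> (\<forall>\<alpha>\<in>{1..m}. crown_le n k (x \<alpha>) (y (cprev m \<alpha>)))"

definition strict_alt_cycle :: "nat \<Rightarrow> nat \<Rightarrow> nat \<Rightarrow> (nat \<Rightarrow> crown_el) \<Rightarrow> (nat \<Rightarrow> crown_el) \<Rightarrow> bool" where
  "strict_alt_cycle n k m x y \<longleftrightarrow> alt_cycle n k m x y \<and>
     (\<forall>\<alpha>\<in>{1..m}. \<forall>\<beta>\<in>{1..m}. crown_le n k (x \<alpha>) (y \<beta>) \<longleftrightarrow> \<beta> = cprev m \<alpha>)"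

text \<open>Position on the circle (u_i for both a_i and b_i) and clockwise offset.\<close>
fun cpos :: "crown_el \<Rightarrow> nat" where
  "cpos (CA i) = i" | "cpos (CB i) = i"

definition cw_off :: "nat \<Rightarrow> nat \<Rightarrow> crown_el \<Rightarrow> crown_el \<Rightarrow> int" where
  "cw_off n k p q = (int (cpos q) - int (cpos p)) mod int (n + k)"

text \<open>Disjoint Property: x1 \<preceq> y1 \<prec> x2 \<preceq> y2 \<prec> x3 \<preceq> y3, read along the clockwise arc from x1 to y3.\<close>
definition disjoint_property :: "nat \<Rightarrow> nat \<Rightarrow> (nat \<Rightarrow> crown_el) \<Rightarrow> (nat \<Rightarrow> crown_el) \<Rightarrow> bool" where
  "disjoint_property n k x y \<longleftrightarrow>
     (let t = cw_off n k (x 1) in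
       0 \<le> t (y 1) \<and> t (y 1) < t (x 2) \<and> t (x 2) \<le> t (y 2) \<and> t (y 2) < t (x 3)
       \<and> t (x 3) \<le> t (y 3))"

end

theory Submission
  imports Defs
begin

lemma cyc_lo:
  assumes "i \<le> j" "j < i + (n+k)"
  shows "cyc_inc n k i j \<longleftrightarrow> j - i \<le> k"
proof -
  have "(int j - int i) mod int (n+k) = int j - int i"
    using assms by (intro mod_pos_pos_trivial) auto
  then show ?thesis using assms unfolding cyc_inc_def by auto
qed

lemma cyc_hi:
  assumes "j < i" "i < j + (n+k)"
  shows "cyc_inc n k i j \<longleftrightarrow> n \<le> i - j"
proof -
  have "(int j - int i) mod int (n+k) = (int j - int i + int (n+k)) mod int (n+k)"
    by simp
  also have "\<dots> = int j - int i + int (n+k)"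
    using assms by (intro mod_pos_pos_trivial) auto
  finally show ?thesis using assms unfolding cyc_inc_def by auto
qed

lemma card_tri:
  "card {(p,q::nat). a \<le> p \<and> p \<le> q \<and> q < a + m} * 2 = m * (m+1)"
proof (induction m)
  case 0
  have "{(p,q::nat). a \<le> p \<and> p \<le> q \<and> q < a + 0} = {}" by auto
  then show ?case by (metis card.empty mult_0 plus_nat.add_0)
next
  case (Suc m)
  have eq: "{(p,q::nat). a \<le> p \<and> p \<le> q \<and> q < a + Suc m} =
     {(p,q::nat). a \<le> p \<and> p \<le> q \<and> q < a + m} \<union> ({a..a+m} \<times> {a+m})"
    by auto
  have fin: "finite {(p,q::nat). a \<le> p \<and> p \<le> q \<and> q < a + m}"
    by (rule finite_subset[of _ "{a..a+m} \<times> {a..a+m}"]) auto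
  have dis: "{(p,q::nat). a \<le> p \<and> p \<le> q \<and> q < a + m} \<inter> ({a..a+m} \<times> {a+m}) = {}"
    by auto
  have "card {(p,q::nat). a \<le> p \<and> p \<le> q \<and> q < a + Suc m} =
     card {(p,q::nat). a \<le> p \<and> p \<le> q \<and> q < a + m} + (m+1)"
    unfolding eq by (subst card_Un_disjoint[OF fin _ dis]) (auto simp: card_cartesian_product)
  then show ?case using Suc by (simp add: algebra_simps)
qed

theorem lemma6p7:
  fixes n k :: nat and S :: "(crown_el \<times> crown_el) set" and x y :: "nat \<Rightarrow> crown_el"
  assumes "n \<ge> 3" and "n \<le> k"
    and "G_independent n k S" and "\<not> reversible n k S"
    and "strict_alt_cycle n k 3 x y" and "(\<lambda>\<alpha>. (x \<alpha>, y \<alpha>)) ` {1..3} \<subseteq> S"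
    and "disjoint_property n k x y"
    and "x 1 = CA 1" and "y 3 = CB (k + 2)"
    and "fst ` S \<subseteq> CA ` {1..k+2}" and "snd ` S \<subseteq> CB ` {1..k+2}"
  shows "real (card S) \<le> (real k + 1) * (real k + 2) / 2 + 2 - real n"
proof -
  define M where "M = k + 2"
  define P where "P = {(i,j). (CA i, CB j) \<in> S}"
  have SInc: "S \<subseteq> Inc n k" using assms(3) unfolding G_independent_def by auto
  have Sform: "S = (\<lambda>(i,j). (CA i, CB j)) ` P"
  proof
    show "S \<subseteq> (\<lambda>(i,j). (CA i, CB j)) ` P"
    proof
      fix s assume "s \<in> S"
      then obtain i j where "s = (CA i, CB j)" using SInc unfolding Inc_def by blast
      then show "s \<in> (\<lambda>(i,j). (CA i, CB j)) ` P" using \<open>s \<in> S\<close> unfolding P_def by force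
    qed
  qed (auto simp: P_def)
  have injP: "inj_on (\<lambda>(i,j). (CA i, CB j)) P" by (auto simp: inj_on_def)
  have cardSP: "card S = card P" using Sform card_image[OF injP] by simp
  have rng: "i \<in> {1..M} \<and> j \<in> {1..M}" if "(i,j) \<in> P" for i j
  proof -
    have "(CA i, CB j) \<in> S" using that by (simp add: P_def)
    then have "CA i \<in> fst ` S" "CB j \<in> snd ` S" by force+
    then show ?thesis using assms(10,11) unfolding M_def by auto
  qed
  have incP: "cyc_inc n k i j" if "(i,j) \<in> P" for i j
    using that SInc unfolding P_def Inc_def by auto
  have lessiff: "crown_less n k (CA i) (CB j) \<longleftrightarrow> \<not> cyc_inc n k i j"
    if "i \<in> {1..M}" "j \<in> {1..M}" for i j
    using that assms(1) unfolding crown_less_def M_def by auto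
  have indep: "cyc_inc n k i j' \<or> cyc_inc n k i' j" if "(i,j) \<in> P" "(i',j') \<in> P" for i j i' j'
  proof -
    have "(CA i, CB j) \<in> S" "(CA i', CB j') \<in> S" using that by (auto simp: P_def)
    then have "\<not> G_adj n k (CA i, CB j) (CA i', CB j')" using assms(3)
      unfolding G_independent_def by blast
    then show ?thesis using lessiff rng[OF that(1)] rng[OF that(2)]
      unfolding G_adj_def by auto
  qed
  have finP: "finite P" by (rule finite_subset[of _ "{1..M} \<times> {1..M}"]) (use rng in auto)
  have cyc_lo': "cyc_inc n k i j \<longleftrightarrow> j - i \<le> k" if "i \<le> j" "i \<in> {1..M}" "j \<in> {1..M}" for i j
    using cyc_lo[of i j n k] that assms(1) unfolding M_def by auto
  have cyc_hi': "cyc_inc n k i j \<longleftrightarrow> n \<le> i - j" if "j < i" "i \<in> {1..M}" "j \<in> {1..M}" for i j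
    using cyc_hi[of j i n k] that assms(1) unfolding M_def by auto
  have not1M: "\<not> cyc_inc n k 1 M" using cyc_lo'[of 1 M] unfolding M_def by auto
  have notadj1: "\<not> cyc_inc n k (Suc j) j" if "j \<in> {1..M}" "Suc j \<in> {1..M}" for j
    using cyc_hi'[of j "Suc j"] that assms(1) by auto
  have m1: "(x 1, y 1) \<in> S" and m2: "(x 2, y 2) \<in> S" and m3: "(x 3, y 3) \<in> S"
    using assms(6) by auto
  obtain j1 where j1: "y 1 = CB j1" "j1 \<in> {1..M}"
    using m1 assms(11) unfolding M_def by force
  obtain i2 where i2: "x 2 = CA i2" "i2 \<in> {1..M}"
    using m2 assms(10) unfolding M_def by force
  obtain j2 where j2: "y 2 = CB j2" "j2 \<in> {1..M}"
    using m2 assms(11) unfolding M_def by force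
  obtain i3 where i3: "x 3 = CA i3" "i3 \<in> {1..M}"
    using m3 assms(10) unfolding M_def by force
  have P1: "(1, j1) \<in> P" using m1 j1 assms(8) by (simp add: P_def)
  have P3: "(i3, M) \<in> P" using m3 i3 assms(9) by (simp add: P_def M_def)
  have offc: "cw_off n k (CA 1) p = int c - 1" if "cpos p = c" "c \<in> {1..M}" for p c
  proof -
    have "(int c - int 1) mod int (n+k) = int c - int 1"
      using that assms(1) unfolding M_def by (intro mod_pos_pos_trivial) auto
    then show ?thesis unfolding cw_off_def using that by simp
  qed
  have o1: "cw_off n k (x 1) (y 1) = int j1 - 1" using offc[of "CB j1" j1] j1 assms(8) by simp
  have o2: "cw_off n k (x 1) (x 2) = int i2 - 1" using offc[of "CA i2" i2] i2 assms(8) by simp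
  have o3: "cw_off n k (x 1) (y 2) = int j2 - 1" using offc[of "CB j2" j2] j2 assms(8) by simp
  have o4: "cw_off n k (x 1) (x 3) = int i3 - 1" using offc[of "CA i3" i3] i3 assms(8) by simp
  have dp: "cw_off n k (x 1) (y 1) < cw_off n k (x 1) (x 2)"
    "cw_off n k (x 1) (x 2) \<le> cw_off n k (x 1) (y 2)"
    "cw_off n k (x 1) (y 2) < cw_off n k (x 1) (x 3)"
    using assms(7) unfolding disjoint_property_def Let_def by blast+
  have "int j1 - 1 < int i2 - 1" "int i2 - 1 \<le> int j2 - 1" "int j2 - 1 < int i3 - 1"
    using dp unfolding o1 o2 o3 o4 by auto
  then have j1i3: "j1 < i3" by linarith
  define LL where "LL = {j. (1,j) \<in> P \<and> j < i3}"
  have finLL: "finite LL" unfolding LL_def by auto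
  have j1LL: "j1 \<in> LL" using P1 j1i3 by (simp add: LL_def)
  define j0 where "j0 = Max LL"
  have j0LL: "j0 \<in> LL" using finLL j1LL unfolding j0_def by (intro Max_in) auto
  have j0max: "j \<le> j0" if "j \<in> LL" for j using finLL that unfolding j0_def by simp
  define RR where "RR = {i. (i,M) \<in> P \<and> j0 < i}"
  have finRR: "finite RR"
  proof (rule finite_subset[of _ "{1..M}"])
    show "RR \<subseteq> {1..M}" unfolding RR_def using rng by blast
  qed simp
  have i3RR: "i3 \<in> RR" using P3 j0LL by (simp add: RR_def LL_def)
  define i0 where "i0 = Min RR"
  have i0RR: "i0 \<in> RR" using finRR i3RR unfolding i0_def by (intro Min_in) auto
  have i0min: "i0 \<le> i" if "i \<in> RR" for i using finRR that unfolding i0_def by simp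
  have i0i3: "i0 \<le> i3" using i0min i3RR by simp
  have Pj0: "(1,j0) \<in> P" and Pi0: "(i0, M) \<in> P" and j0i0: "j0 < i0"
    using j0LL i0RR by (auto simp: LL_def RR_def)
  have gap: "n \<le> i0 - j0"
  proof -
    have "cyc_inc n k i0 j0" using indep[OF Pj0 Pi0] not1M by auto
    then show ?thesis using cyc_hi'[OF j0i0] rng[OF Pj0] rng[OF Pi0] by auto
  qed
  define End where "End = {p\<in>P. fst p = 1 \<or> snd p = M}"
  define Rest where "Rest = P - End"
  have cardP: "card P = card End + card Rest"
  proof -
    have u: "P = End \<union> Rest" and d: "End \<inter> Rest = {}"
      unfolding Rest_def End_def by auto
    have fE: "finite End" and fR: "finite Rest"
      using finP unfolding Rest_def End_def by auto
    show ?thesis by (subst u) (rule card_Un_disjoint[OF fE fR d])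
  qed
  define I' where "I' = {(p,q::nat). 2 \<le> p \<and> p \<le> q \<and> q < 2 + k}"
  define f where "f = (\<lambda>(i::nat,j::nat). if j < i then (j+1, i-1) else (i,j))"
  have fI: "f ` Rest \<subseteq> I'"
  proof
    fix z assume "z \<in> f ` Rest"
    then obtain i j where ij: "(i,j) \<in> Rest" "z = f (i,j)" by auto
    have P': "(i,j) \<in> P" "i \<noteq> 1" "j \<noteq> M" using ij(1) by (auto simp: Rest_def End_def)
    show "z \<in> I'"
    proof (cases "j < i")
      case True
      then have "n \<le> i - j" using cyc_hi'[OF True] rng[OF P'(1)] incP[OF P'(1)] by auto
      then show ?thesis using ij True rng[OF P'(1)] assms(1) by (auto simp: f_def I'_def M_def)
    next
      case False
      then show ?thesis using ij P' rng[OF P'(1)] by (auto simp: f_def I'_def M_def)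
    qed
  qed
  have finj: "inj_on f Rest"
  proof (rule inj_onI)
    fix u v assume u: "u \<in> Rest" and v: "v \<in> Rest" and fe: "f u = f v"
    obtain i j where uu: "u = (i,j)" by fastforce
    obtain i' j' where vv: "v = (i',j')" by fastforce
    have Pu: "(i,j) \<in> P" and Pv: "(i',j') \<in> P" using u v uu vv by (auto simp: Rest_def)
    have ri: "i \<in> {1..M}" "j \<in> {1..M}" using rng[OF Pu] by auto
    have ri': "i' \<in> {1..M}" "j' \<in> {1..M}" using rng[OF Pv] by auto
    have mixed: False if "(i,j) \<in> P" "(j+1, i-1) \<in> P" "j < i" for i j
    proof -
      have r: "i \<in> {1..M}" "j \<in> {1..M}" using rng[OF that(1)] by auto
      have "cyc_inc n k i (i-1) \<or> cyc_inc n k (j+1) j" using indep[OF that(1,2)] .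
      moreover have "\<not> cyc_inc n k i (i-1)"
        using notadj1[of "i-1"] r that(3) rng[OF that(2)] by auto
      moreover have "\<not> cyc_inc n k (j+1) j"
        using notadj1[of j] r that(3) rng[OF that(2)] by auto
      ultimately show False by blast
    qed
    show "u = v"
    proof (cases "j < i")
      case T1: True
      show ?thesis
      proof (cases "j' < i'")
        case True
        then show ?thesis using fe T1 uu vv ri ri' by (auto simp: f_def)
      next
        case False
        then have "(j+1, i-1) = (i',j')" using fe T1 uu vv by (simp add: f_def)
        then show ?thesis using mixed[OF Pu _ T1] Pv by simp
      qed
    next
      case F1: False
      show ?thesis
      proof (cases "j' < i'")
        case True
        then have "(j'+1, i'-1) = (i,j)" using fe F1 uu vv by (simp add: f_def)
        then show ?thesis using mixed[OF Pv _ True] Pu by simp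
      next
        case False
        then show ?thesis using fe F1 uu vv by (simp add: f_def)
      qed
    qed
  qed
  have finI': "finite I'" unfolding I'_def
    by (rule finite_subset[of _ "{..<2+k} \<times> {..<2+k}"]) auto
  have cardRest: "card Rest \<le> card I'"
    using card_inj_on_le[OF finj fI finI'] .
  have cardI': "card I' * 2 = k * (k+1)"
    unfolding I'_def using card_tri[of 2 k] by simp
  define g where "g = (\<lambda>(i::nat,j::nat). if i = 1 then j else i - 1)"
  define G where "G = {j0<..<i0-1}"
  have gT: "g ` End \<subseteq> {1..k+1} - G"
  proof
    fix z assume "z \<in> g ` End"
    then obtain i j where ij: "(i,j) \<in> End" "z = g (i,j)" by auto
    have Pij: "(i,j) \<in> P" using ij by (simp add: End_def)
    have r: "i \<in> {1..M}" "j \<in> {1..M}" using rng[OF Pij] by auto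
    show "z \<in> {1..k+1} - G"
    proof (cases "i = 1")
      case True
      then have "j \<noteq> M" using incP[OF Pij] not1M by auto
      moreover have "j \<notin> G"
      proof
        assume "j \<in> G"
        then have "j \<in> LL" using Pij True i0i3 by (auto simp: G_def LL_def)
        then show False using j0max \<open>j \<in> G\<close> by (force simp: G_def)
      qed
      ultimately show ?thesis using ij True r by (auto simp: g_def M_def)
    next
      case False
      then have jM: "j = M" using ij by (simp add: End_def)
      have "i - 1 \<notin> G"
      proof
        assume "i - 1 \<in> G"
        then have "i \<in> RR" using Pij jM by (auto simp: G_def RR_def)
        then show False using i0min \<open>i - 1 \<in> G\<close> by (force simp: G_def)
      qed
      then show ?thesis using ij False r by (auto simp: g_def M_def)
    qed
  qed
  have ginj: "inj_on g End"
  proof (rule inj_onI)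
    fix u v assume u: "u \<in> End" and v: "v \<in> End" and fe: "g u = g v"
    obtain i j where uu: "u = (i,j)" by fastforce
    obtain i' j' where vv: "v = (i',j')" by fastforce
    have Pu: "(i,j) \<in> P" and Pv: "(i',j') \<in> P" using u v uu vv by (auto simp: End_def)
    have eu: "i = 1 \<or> j = M" and ev: "i' = 1 \<or> j' = M" using u v uu vv by (auto simp: End_def)
    have ri: "i \<in> {1..M}" "j \<in> {1..M}" using rng[OF Pu] by auto
    have ri': "i' \<in> {1..M}" "j' \<in> {1..M}" using rng[OF Pv] by auto
    have mixed: False if "(1,j) \<in> P" "(j+1, M) \<in> P" for j
    proof -
      have "cyc_inc n k 1 M \<or> cyc_inc n k (j+1) j" using indep[OF that] .
      then show False using not1M notadj1[of j] rng[OF that(1)] rng[OF that(2)] by auto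
    qed
    show "u = v"
    proof (cases "i = 1")
      case T1: True
      show ?thesis
      proof (cases "i' = 1")
        case True
        then show ?thesis using fe T1 uu vv by (auto simp: g_def)
      next
        case False
        then have "j = i' - 1" "j' = M" using fe T1 uu vv ev by (auto simp: g_def)
        then show ?thesis using mixed[of j] Pu Pv T1 ri' False by (simp add: Suc_diff_1)
      qed
    next
      case F1: False
      show ?thesis
      proof (cases "i' = 1")
        case True
        then have "j' = i - 1" "j = M" using fe F1 uu vv eu by (auto simp: g_def)
        then show ?thesis using mixed[of j'] Pu Pv True ri F1 by (simp add: Suc_diff_1)
      next
        case False
        then show ?thesis using fe F1 uu vv eu ev ri ri' by (auto simp: g_def)
      qed
    qed
  qed
  have Gsub: "G \<subseteq> {1..k+1}" using rng[OF Pi0] unfolding G_def M_def by auto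
  have cardG: "card G = i0 - 1 - Suc j0" unfolding G_def by simp
  have cardEnd: "card End \<le> (k+1) - card G"
  proof -
    have "card End = card (g ` End)" using card_image[OF ginj] by simp
    also have "\<dots> \<le> card ({1..k+1} - G)" by (rule card_mono[OF _ gT]) auto
    also have "\<dots> = (k+1) - card G" using Gsub by (simp add: card_Diff_subset finite_subset)
    finally show ?thesis .
  qed
  have cG: "n - 2 \<le> card G" using cardG gap by simp
  have cG2: "card G \<le> k + 1"
  proof -
    have "card G \<le> card {1..k+1}" by (rule card_mono[OF _ Gsub]) simp
    then show ?thesis by simp
  qed
  have "card P \<le> (k + 1 - card G) + card I'" using cardP cardEnd cardRest by simp
  then have "real (card P) \<le> real (k + 1) - real (n-2) + real (card I')"
    using cG cG2 by linarith
  moreover have "real (card I') = real k * (real k + 1) / 2"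
  proof -
    have "real (card I' * 2) = real (k * (k+1))" using cardI' by presburger
    then show ?thesis by (simp add: algebra_simps)
  qed
  moreover have "real (n - 2) = real n - 2" using assms(1) by simp
  ultimately have "real (card P) \<le> real k + 1 - (real n - 2) + real k * (real k + 1) / 2"
    by simp
  then show ?thesis using cardSP by (simp add: field_simps)
qed

end
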